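(* Let $n,m\ge1$, let $K\subset\mathbb{R}^n$ be compact, let $f:K\to\mathbb{R}$ be continuous and $\varepsilon>0$. Then there exists an IWCNN $f_\theta=g^{\mathrm{ICNN}}_{\theta_1}\circ g^{\mathrm{sm}}_{\theta_2}$ with intermediate dimension $m$ (i.e. $g^{\mathrm{sm}}_{\theta_2}:\mathbb{R}^n\to\mathbb{R}^m$ and $g^{\mathrm{ICNN}}_{\theta_1}:\mathbb{R}^m\to\mathbb{R}$) such that $\sup_{x\in K}|f_\theta(x)-f(x)|<\varepsilon$.
   Context: An input convex neural network (ICNN) $g:\mathbb{R}^m\to\mathbb{R}$ is a feedforward network $z_1=\sigma(W_0^{(y)}u+b_0)$, $z_{i+1}=\sigma(W_i^{(z)}z_i+W_i^{(y)}u+b_i)$, output $g(u)=z_L$ (final layer affine allowed), with nonnegative weight matrices $W_i^{(z)}$ and \texttt{ReLU} (or other convex nondecreasing) activations $\sigma$, so that $g$ is convex in its input $u$. $g^{\mathrm{sm}}:\mathbb{R}^n\to\mathbb{R}^m$ is a feedforward neural network (of arbitrary depth) whose activation functions are nonaffine, continuously differentiable with Lipschitz derivative (e.g. SiLU). An input weakly convex neural network (IWCNN) is a composition $g^{\mathrm{ICNN}}\circ g^{\mathrm{sm}}$ of such networks. *)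

theory Defs
  imports "HOL-Analysis.Analysis"
begin

text \<open>Vectors of hidden layers are represented as functions nat => real; a hidden
layer of input width d only reads the coordinates j < d.\<close>

definition relu :: "real \<Rightarrow> real" where
  "relu x = max 0 x"

definition smooth_activation :: "(real \<Rightarrow> real) \<Rightarrow> bool" where
  "smooth_activation \<rho> \<longleftrightarrow>
     (\<exists>\<rho>'. (\<forall>x. (\<rho> has_real_derivative \<rho>' x) (at x)) \<and> (\<exists>L. L-lipschitz_on UNIV \<rho>'))
     \<and> \<not> (\<exists>a b. \<forall>x. \<rho> x = a * x + b)"

text \<open>Smooth feedforward network R^n -> R^m:
  first layer (W0,b0) from real^'n, hidden layers (d,W,b) with input width d,
  all followed by the activation; final affine layer (dL,V,c) into real^'m.\<close>
datatype ('n, 'm) smooth_net =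
  SNet "nat \<Rightarrow> 'n \<Rightarrow> real" "nat \<Rightarrow> real"
       "(nat \<times> (nat \<Rightarrow> nat \<Rightarrow> real) \<times> (nat \<Rightarrow> real)) list"
       nat "'m \<Rightarrow> nat \<Rightarrow> real" "'m \<Rightarrow> real"

fun sm_hidden :: "(real \<Rightarrow> real) \<Rightarrow> (nat \<times> (nat \<Rightarrow> nat \<Rightarrow> real) \<times> (nat \<Rightarrow> real)) list
                   \<Rightarrow> (nat \<Rightarrow> real) \<Rightarrow> (nat \<Rightarrow> real)" where
  "sm_hidden \<rho> [] z = z"
| "sm_hidden \<rho> ((d, W, b) # hs) z =
     sm_hidden \<rho> hs (\<lambda>i. \<rho> (b i + (\<Sum>j<d. W i j * z j)))"

fun sm_eval :: "(real \<Rightarrow> real) \<Rightarrow> ('n::finite, 'm::finite) smooth_net \<Rightarrow> real^'n \<Rightarrow> real^'m" where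
  "sm_eval \<rho> (SNet W0 b0 hs dL V c) x =
     (let z1 = (\<lambda>i. \<rho> (b0 i + (\<Sum>j\<in>UNIV. W0 i j * x $ j)));
          zL = sm_hidden \<rho> hs z1
      in \<chi> k. c k + (\<Sum>j<dL. V k j * zL j))"

text \<open>ICNN R^m -> R with ReLU activations:
  z1 = relu(W0y u + b0); hidden layers (d, Wz, Wy, b) with input width d:
  z' = relu(Wz z + Wy u + b); final affine layer c + wz . z + wy . u.
  Convexity constraints: all Wz and wz are entrywise nonnegative.\<close>
datatype 'm icnn =
  ICNN "nat \<Rightarrow> 'm \<Rightarrow> real" "nat \<Rightarrow> real"
       "(nat \<times> (nat \<Rightarrow> nat \<Rightarrow> real) \<times> (nat \<Rightarrow> 'm \<Rightarrow> real) \<times> (nat \<Rightarrow> real)) list"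
       nat "nat \<Rightarrow> real" "'m \<Rightarrow> real" real

fun icnn_hidden :: "real^'m \<Rightarrow> (nat \<times> (nat \<Rightarrow> nat \<Rightarrow> real) \<times> (nat \<Rightarrow> 'm::finite \<Rightarrow> real) \<times> (nat \<Rightarrow> real)) list
                   \<Rightarrow> (nat \<Rightarrow> real) \<Rightarrow> (nat \<Rightarrow> real)" where
  "icnn_hidden u [] z = z"
| "icnn_hidden u ((d, Wz, Wy, b) # hs) z =
     icnn_hidden u hs (\<lambda>i. relu ((\<Sum>j<d. Wz i j * z j) + (\<Sum>k\<in>UNIV. Wy i k * u $ k) + b i))"

fun icnn_eval :: "'m::finite icnn \<Rightarrow> real^'m \<Rightarrow> real" where
  "icnn_eval (ICNN W0 b0 hs dL wz wy c) u =
     (let z1 = (\<lambda>i. relu ((\<Sum>k\<in>UNIV. W0 i k * u $ k) + b0 i));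
          zL = icnn_hidden u hs z1
      in (\<Sum>j<dL. wz j * zL j) + (\<Sum>k\<in>UNIV. wy k * u $ k) + c)"

fun icnn_valid :: "'m icnn \<Rightarrow> bool" where
  "icnn_valid (ICNN W0 b0 hs dL wz wy c) \<longleftrightarrow>
     (\<forall>(d, Wz, Wy, b) \<in> set hs. \<forall>i j. 0 \<le> Wz i j) \<and> (\<forall>j. 0 \<le> wz j)"

end

theory Submission
  imports Defs "HOL-Analysis.Analysis"
begin


lemma mvt_bound:
  fixes f f' :: "real \<Rightarrow> real"
  assumes der: "\<And>x. \<bar>x - a\<bar> \<le> \<bar>b - a\<bar> \<Longrightarrow> DERIV f x :> f' x"
      and bd: "\<And>x. \<bar>x - a\<bar> \<le> \<bar>b - a\<bar> \<Longrightarrow> \<bar>f' x\<bar> \<le> B"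
  shows "\<bar>f b - f a\<bar> \<le> B * \<bar>b - a\<bar>"
proof (cases a b rule: linorder_cases)
  case less
  have d: "DERIV f x :> f' x" if "a \<le> x" "x \<le> b" for x
    using that less by (intro der) auto
  obtain z where z: "a < z" "z < b" "f b - f a = (b - a) * f' z"
    using MVT2[OF less d] by blast
  have "\<bar>f' z\<bar> \<le> B" using z less by (intro bd) auto
  then have "\<bar>b - a\<bar> * \<bar>f' z\<bar> \<le> \<bar>b - a\<bar> * B" by (rule mult_left_mono) simp
  then show ?thesis using z by (simp add: abs_mult mult.commute)
next
  case equal then show ?thesis by simp
next
  case greater
  have d: "DERIV f x :> f' x" if "b \<le> x" "x \<le> a" for x
    using that greater by (intro der) auto
  obtain z where z: "b < z" "z < a" "f a - f b = (a - b) * f' z"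
    using MVT2[OF greater d] by blast
  have "\<bar>f' z\<bar> \<le> B" using z greater by (intro bd) auto
  then have "\<bar>a - b\<bar> * \<bar>f' z\<bar> \<le> \<bar>a - b\<bar> * B" by (rule mult_left_mono) simp
  then have "\<bar>f a - f b\<bar> \<le> B * \<bar>a - b\<bar>" using z by (simp add: abs_mult mult.commute)
  then show ?thesis by (simp add: abs_minus_commute)
qed

lemma taylor1_bound:
  fixes f f' :: "real \<Rightarrow> real"
  assumes der: "\<And>x. \<bar>x - a\<bar> \<le> \<bar>b - a\<bar> \<Longrightarrow> DERIV f x :> f' x"
      and lip: "\<And>x. \<bar>x - a\<bar> \<le> \<bar>b - a\<bar> \<Longrightarrow> \<bar>f' x - f' a\<bar> \<le> L * \<bar>x - a\<bar>"
      and L: "0 \<le> L"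
  shows "\<bar>f b - f a - f' a * (b - a)\<bar> \<le> L * (b - a)^2"
proof -
  have "\<bar>(f b - f' a * b) - (f a - f' a * a)\<bar> \<le> (L * \<bar>b - a\<bar>) * \<bar>b - a\<bar>"
  proof (rule mvt_bound[where f'="\<lambda>x. f' x - f' a"])
    fix x assume x: "\<bar>x - a\<bar> \<le> \<bar>b - a\<bar>"
    show "DERIV (\<lambda>x. f x - f' a * x) x :> f' x - f' a"
      using der[OF x] by (auto intro!: derivative_eq_intros)
    show "\<bar>f' x - f' a\<bar> \<le> L * \<bar>b - a\<bar>"
      using lip[OF x] x L by (meson mult_left_mono order_trans)
  qed
  then show ?thesis by (simp add: algebra_simps power2_eq_square abs_mult_self_eq)
qed



definition Q1 :: "(real \<Rightarrow> real) \<Rightarrow> (real \<Rightarrow> real) set" where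
  "Q1 \<rho> = {q. \<exists>c0 (d::nat) c \<alpha> \<beta>. \<forall>u. q u = c0 + (\<Sum>k<d. c k * \<rho> (\<alpha> k * u + \<beta> k))}"

lemma sum_split_nat: "(\<Sum>k<d1+d2. f k) = (\<Sum>k<d1. f k) + (\<Sum>k<d2. f (d1 + k))"
  for f :: "nat \<Rightarrow> 'a::comm_monoid_add"
  by (induct d2) (simp_all add: add_ac)

lemma Q1_const: "(\<lambda>u. c) \<in> Q1 \<rho>"
  unfolding Q1_def by (rule CollectI, rule exI[of _ c], rule exI[of _ 0]) simp

lemma Q1_affine: "q \<in> Q1 \<rho> \<Longrightarrow> (\<lambda>u. c + s * q u) \<in> Q1 \<rho>"
  unfolding Q1_def
proof (clarify)
  fix c0 and d::nat and cc \<alpha> \<beta> assume q: "\<forall>u. q u = c0 + (\<Sum>k<d. cc k * \<rho> (\<alpha> k * u + \<beta> k))"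
  show "\<exists>c0 (d::nat) ca \<alpha> \<beta>. \<forall>u. c + s * q u = c0 + (\<Sum>k<d. ca k * \<rho> (\<alpha> k * u + \<beta> k))"
    by (rule exI[of _ "c + s * c0"], rule exI[of _ d], rule exI[of _ "\<lambda>k. s * cc k"],
        rule exI[of _ \<alpha>], rule exI[of _ \<beta>])
       (simp add: q algebra_simps sum_distrib_left)
qed

lemma Q1_add: "q1 \<in> Q1 \<rho> \<Longrightarrow> q2 \<in> Q1 \<rho> \<Longrightarrow> (\<lambda>u. q1 u + q2 u) \<in> Q1 \<rho>"
  unfolding Q1_def
proof (clarify)
  fix c1 and d1::nat and cc1 \<alpha>1 \<beta>1 c2 and d2::nat and cc2 \<alpha>2 \<beta>2
  assume q1: "\<forall>u. q1 u = c1 + (\<Sum>k<d1. cc1 k * \<rho> (\<alpha>1 k * u + \<beta>1 k))"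
     and q2: "\<forall>u. q2 u = c2 + (\<Sum>k<d2. cc2 k * \<rho> (\<alpha>2 k * u + \<beta>2 k))"
  define cc where "cc = (\<lambda>k. if k < d1 then cc1 k else cc2 (k - d1))"
  define al where "al = (\<lambda>k. if k < d1 then \<alpha>1 k else \<alpha>2 (k - d1))"
  define be where "be = (\<lambda>k. if k < d1 then \<beta>1 k else \<beta>2 (k - d1))"
  have "q1 u + q2 u = (c1 + c2) + (\<Sum>k<d1+d2. cc k * \<rho> (al k * u + be k))" for u
  proof -
    have e1: "(\<Sum>k<d1. cc k * \<rho> (al k * u + be k)) = (\<Sum>k<d1. cc1 k * \<rho> (\<alpha>1 k * u + \<beta>1 k))"
      by (rule sum.cong) (auto simp: cc_def al_def be_def)
    have e2: "(\<Sum>k<d2. cc (d1+k) * \<rho> (al (d1+k) * u + be (d1+k))) = (\<Sum>k<d2. cc2 k * \<rho> (\<alpha>2 k * u + \<beta>2 k))"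
      by (rule sum.cong) (auto simp: cc_def al_def be_def)
    show ?thesis unfolding sum_split_nat e1 e2 q1[rule_format] q2[rule_format] by simp
  qed
  then show "\<exists>c0 (d::nat) ca \<alpha> \<beta>. \<forall>u. q1 u + q2 u = c0 + (\<Sum>k<d. ca k * \<rho> (\<alpha> k * u + \<beta> k))"
    by blast
qed

lemma Q1_sum: "(\<lambda>u. \<Sum>k<(N::nat). h * \<rho> (t * u + \<beta> k)) \<in> Q1 \<rho>"
  unfolding Q1_def
  by (rule CollectI, rule exI[of _ 0], rule exI[of _ N], rule exI[of _ "\<lambda>k. h"],
        rule exI[of _ "\<lambda>k. t"], rule exI[of _ \<beta>]) simp

locale act =
  fixes \<rho> \<rho>' :: "real \<Rightarrow> real" and Lp :: real
  assumes der: "\<And>x. DERIV \<rho> x :> \<rho>' x"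
    and lip: "\<And>x y. \<bar>\<rho>' x - \<rho>' y\<bar> \<le> Lp * \<bar>x - y\<bar>"
    and Lnn: "0 \<le> Lp"
begin

lemma rho_cont: "continuous_on S \<rho>"
  using der by (meson DERIV_isCont continuous_at_imp_continuous_on)

end



lemma abs3:
  fixes s1 s2 s3 x1 x2 x3 X :: real
  shows "\<bar>s1 - x1\<bar> \<le> X \<Longrightarrow> \<bar>s2 - x2\<bar> \<le> X \<Longrightarrow> \<bar>s3 - x3\<bar> \<le> X \<Longrightarrow>
    \<bar>(x1 - s1) + (x2 - s2) - 2*(x3 - s3)\<bar> \<le> 4*X"
  by (auto simp: abs_le_iff)

context act begin

lemma sq_approx:
  assumes nc: "\<rho>' a \<noteq> \<rho>' b" and R: "0 < R" and eta: "0 < \<eta>"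
  shows "\<exists>q\<in>Q1 \<rho>. \<forall>u. \<bar>u\<bar> \<le> R \<longrightarrow> \<bar>q u - u^2\<bar> \<le> \<eta>"
proof -
  define \<delta> where "\<delta> = b - a"
  define \<kappa> where "\<kappa> = \<rho>' b - \<rho>' a"
  have \<kappa>: "\<kappa> \<noteq> 0" using nc by (simp add: \<kappa>_def)
  define M where "M = \<bar>a\<bar> + R + 2*\<bar>\<delta>\<bar> + 1"
  have cont: "continuous_on {-M..M} \<rho>" by (rule rho_cont)
  define P where "P = (\<lambda>x. integral {-M..x} \<rho>)"
  have Pder: "DERIV P x :> \<rho> x" if "\<bar>x\<bar> < M" for x
  proof -
    have "(P has_real_derivative \<rho> x) (at x within {-M..M})"
    proof -
      have "-M \<le> x" "x \<le> M" using that by auto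
      then show ?thesis unfolding P_def using integral_has_real_derivative[OF cont] by auto
    qed
    moreover have "at x within {-M..M} = at x" using that by (intro at_within_Icc_at) auto
    ultimately show ?thesis by simp
  qed
  define \<sigma> where "\<sigma> = (\<lambda>s. P (s + \<delta>) - P s)"
  define \<sigma>1 where "\<sigma>1 = (\<lambda>s. \<rho> (s + \<delta>) - \<rho> s)"
  define \<sigma>2 where "\<sigma>2 = (\<lambda>s. \<rho>' (s + \<delta>) - \<rho>' s)"
  have \<sigma>der: "DERIV \<sigma> s :> \<sigma>1 s" if "\<bar>s\<bar> \<le> \<bar>a\<bar> + R" for s
  proof -
    have "\<bar>s + \<delta>\<bar> < M" "\<bar>s\<bar> < M" using that R by (auto simp: M_def)
    hence "DERIV P (s+\<delta>) :> \<rho>(s+\<delta>)" "DERIV P s :> \<rho> s" using Pder by auto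
    then have "DERIV (\<lambda>s. P (s+\<delta>)) s :> \<rho>(s+\<delta>)" "DERIV P s :> \<rho> s"
      using DERIV_shift by blast+
    then show ?thesis unfolding \<sigma>_def \<sigma>1_def by (rule DERIV_diff)
  qed
  have \<sigma>1der: "DERIV \<sigma>1 s :> \<sigma>2 s" for s
  proof -
    have "DERIV (\<lambda>s. \<rho> (s+\<delta>)) s :> \<rho>'(s+\<delta>)" using DERIV_shift der by blast
    then show ?thesis unfolding \<sigma>1_def \<sigma>2_def using der by (rule DERIV_diff)
  qed
  have \<sigma>2lip: "\<bar>\<sigma>2 x - \<sigma>2 y\<bar> \<le> (2*Lp) * \<bar>x - y\<bar>" for x y
  proof -
    have "\<bar>\<rho>' (x+\<delta>) - \<rho>' (y+\<delta>)\<bar> \<le> Lp * \<bar>x - y\<bar>" using lip[of "x+\<delta>" "y+\<delta>"] by simp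
    moreover have "\<bar>\<rho>' x - \<rho>' y\<bar> \<le> Lp * \<bar>x - y\<bar>" by (rule lip)
    ultimately show ?thesis unfolding \<sigma>2_def by linarith
  qed
  have \<sigma>2a: "\<sigma>2 a = \<kappa>" by (simp add: \<sigma>2_def \<kappa>_def \<delta>_def)
  have phi: "abs (\<sigma>(a+v) + \<sigma>(a-v) - 2*\<sigma> a - \<kappa>* v^2) \<le> 4*Lp*(abs v)^3" if v: "\<bar>v\<bar> \<le> R" for v
  proof -
    have t1: "\<bar>\<sigma>1 (a+w) - \<sigma>1 a - \<kappa>*w\<bar> \<le> 2*Lp*w^2" for w
    proof -
      have "\<bar>\<sigma>1 (a+w) - \<sigma>1 a - \<sigma>2 a * ((a+w) - a)\<bar> \<le> (2*Lp)*((a+w)-a)^2"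
        by (rule taylor1_bound[OF \<sigma>1der \<sigma>2lip]) (simp add: Lnn)
      then show ?thesis by (simp add: \<sigma>2a)
    qed
    have t2: "\<bar>\<sigma>1 (a-w) - \<sigma>1 a + \<kappa>*w\<bar> \<le> 2*Lp*w^2" for w
    proof -
      have "\<bar>\<sigma>1 (a-w) - \<sigma>1 a - \<sigma>2 a * ((a-w) - a)\<bar> \<le> (2*Lp)*((a-w)-a)^2"
        by (rule taylor1_bound[OF \<sigma>1der \<sigma>2lip]) (simp add: Lnn)
      then show ?thesis by (simp add: \<sigma>2a)
    qed
    define \<phi> where "\<phi> = (\<lambda>v. \<sigma>(a+v) + \<sigma>(a-v) - 2*\<sigma> a - \<kappa>* v^2)"
    define \<phi>' where "\<phi>' = (\<lambda>w. \<sigma>1(a+w) - \<sigma>1(a-w) - 2*\<kappa>*w)"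
    have "\<bar>\<phi> v - \<phi> 0\<bar> \<le> (4*Lp* v^2) * \<bar>v - 0\<bar>"
    proof (rule mvt_bound[where f'=\<phi>'])
      fix w assume w: "\<bar>w - 0\<bar> \<le> \<bar>v - 0\<bar>"
      have wR: "\<bar>w\<bar> \<le> R" using w v by simp
      have "\<bar>a + w\<bar> \<le> \<bar>a\<bar> + R" using abs_triangle_ineq[of a w] wR by linarith
      moreover have "\<bar>a - w\<bar> \<le> \<bar>a\<bar> + R" using abs_triangle_ineq4[of a w] wR by linarith
      ultimately have d1: "DERIV \<sigma> (a+w) :> \<sigma>1 (a+w)" and d2: "DERIV \<sigma> (a-w) :> \<sigma>1 (a-w)"
        using \<sigma>der by auto
      have e1: "DERIV (\<lambda>w. \<sigma>(a+w)) w :> \<sigma>1 (a+w) * 1"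
        by (rule DERIV_chain2[where g="\<lambda>w. a + w", OF d1]) (auto intro!: derivative_eq_intros)
      have e2: "DERIV (\<lambda>w. \<sigma>(a-w)) w :> \<sigma>1 (a-w) * (-1)"
        by (rule DERIV_chain2[where g="\<lambda>w. a - w", OF d2]) (auto intro!: derivative_eq_intros)
      have e4: "DERIV (\<lambda>w. \<kappa> * w^2) w :> \<kappa>*(2*w)"
        by (auto intro!: derivative_eq_intros)
      have "DERIV (\<lambda>w. \<sigma>(a+w) + \<sigma>(a-w) - 2*\<sigma> a - \<kappa> * w^2) w :> \<sigma>1 (a+w) * 1 + \<sigma>1 (a-w) * (-1) - 0 - \<kappa>*(2*w)"
        by (intro DERIV_diff DERIV_add e1 e2 e4 DERIV_const)
      moreover have eq: "\<sigma>1 (a+w) * 1 + \<sigma>1 (a-w) * (-1) - 0 - \<kappa>*(2*w) = \<phi>' w"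
        by (simp add: \<phi>'_def)
      ultimately show "DERIV \<phi> w :> \<phi>' w"
        unfolding \<phi>_def by simp
      have "\<bar>w\<bar> \<le> \<bar>v\<bar>" using w by simp
      then have "\<bar>w\<bar>^2 \<le> \<bar>v\<bar>^2" by (rule power_mono) simp
      then have "w^2 \<le> v^2" by simp
      have "\<bar>\<phi>' w\<bar> \<le> 4*Lp*w^2" unfolding \<phi>'_def using t1[of w] t2[of w] by linarith
      also have "\<dots> \<le> 4*Lp* v^2" using \<open>w^2 \<le> v^2\<close> Lnn by (simp add: mult_left_mono)
      finally show "\<bar>\<phi>' w\<bar> \<le> 4*Lp* v^2" .
    qed
    moreover have "\<phi> 0 = 0" by (simp add: \<phi>_def)
    moreover have "(4*Lp* v^2) * abs v = 4*Lp*(abs v)^3"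
      by (cases "v \<ge> 0") (simp_all add: power2_eq_square power3_eq_cube abs_of_nonneg abs_of_neg)
    ultimately show ?thesis by (simp add: \<phi>_def)
  qed

  define B0 where "B0 = \<bar>\<rho>' 0\<bar> + Lp * M"
  have B0: "0 \<le> B0" using Lnn R by (simp add: B0_def M_def)
  have rbd: "\<bar>\<rho>' x\<bar> \<le> B0" if "\<bar>x\<bar> \<le> M" for x
  proof -
    have "\<bar>\<rho>' x - \<rho>' 0\<bar> \<le> Lp * \<bar>x\<bar>" using lip[of x 0] by simp
    moreover have "Lp * \<bar>x\<bar> \<le> Lp * M" using that Lnn by (rule mult_left_mono)
    ultimately show ?thesis unfolding B0_def by linarith
  qed
  have rlip: "\<bar>\<rho> y - \<rho> x\<bar> \<le> B0 * \<bar>y - x\<bar>" if "\<bar>x\<bar> + \<bar>y - x\<bar> \<le> M" for x y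
  proof (rule mvt_bound[where f'=\<rho>'])
    fix z assume z: "\<bar>z - x\<bar> \<le> \<bar>y - x\<bar>"
    show "DERIV \<rho> z :> \<rho>' z" by (rule der)
    have "\<bar>z\<bar> \<le> \<bar>x\<bar> + \<bar>z - x\<bar>" using abs_triangle_ineq[of x "z - x"] by simp
    then show "\<bar>\<rho>' z\<bar> \<le> B0" using z that by (intro rbd) linarith
  qed
  define t where "t = min 1 (\<eta> * \<bar>\<kappa>\<bar> / (8 * (Lp + 1) * R^3))"
  have kpos: "0 < \<bar>\<kappa>\<bar>" using \<kappa> by simp
  have t0: "0 < t" unfolding t_def using eta kpos R Lnn by (auto intro!: divide_pos_pos mult_pos_pos)
  have t1: "t \<le> 1" unfolding t_def by simp
  have t2: "t \<le> \<eta> * \<bar>\<kappa>\<bar> / (8 * (Lp + 1) * R^3)" unfolding t_def by simp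
  have tR: "8 * Lp * R^3 * t \<le> \<eta> * \<bar>\<kappa>\<bar>"
  proof -
    have pos: "0 < 8 * (Lp + 1) * R^3" using Lnn R by simp
    have "t * (8 * (Lp + 1) * R^3) \<le> \<eta> * \<bar>\<kappa>\<bar>" using t2 pos by (simp add: le_divide_eq)
    moreover have "8 * Lp * R^3 * t \<le> t * (8 * (Lp + 1) * R^3)" using t0 R by (simp add: algebra_simps)
    ultimately show ?thesis by linarith
  qed
  define T where "T = t^2 * \<bar>\<kappa>\<bar>"
  have T0: "0 < T" unfolding T_def using t0 kpos by simp
  define N :: nat where "N = nat \<lceil>8 * B0 * \<delta>^2 / (\<eta> * T)\<rceil> + 1"
  have N1: "1 \<le> N" unfolding N_def by simp
  have NT: "4 * B0 * \<delta>^2 / N \<le> \<eta> * T / 2"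
  proof -
    have "8 * B0 * \<delta>^2 / (\<eta> * T) \<le> real N" unfolding N_def by linarith
    then have "8 * B0 * \<delta>^2 \<le> real N * (\<eta> * T)" using eta T0 by (simp add: divide_le_eq)
    then show ?thesis using N1 by (simp add: divide_le_eq algebra_simps)
  qed
  define h where "h = \<delta> / N"
  define S where "S = (\<lambda>s. \<Sum>k<N. h * \<rho> (s + real k * h))"
  have hb: "\<bar>h\<bar> \<le> \<bar>\<delta>\<bar>"
  proof -
    have "1 \<le> real N" using N1 by simp
    then have "\<bar>\<delta>\<bar> \<le> \<bar>\<delta>\<bar> * real N" using mult_left_mono[of 1 "real N" "\<bar>\<delta>\<bar>"] by simp
    then show ?thesis unfolding h_def using N1 by (simp add: divide_le_eq)
  qed
  have kh: "\<bar>real k * h\<bar> \<le> \<bar>\<delta>\<bar>" if "k < N" for k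
  proof -
    have "\<bar>real k * h\<bar> = real k * \<bar>\<delta>\<bar> / N" unfolding h_def by (simp add: abs_mult)
    also have "\<dots> \<le> \<bar>\<delta>\<bar>"
    proof -
      have "real k \<le> real N" using that by simp
      then have "real k * \<bar>\<delta>\<bar> \<le> \<bar>\<delta>\<bar> * real N" using mult_right_mono[of "real k" "real N" "\<bar>\<delta>\<bar>"] by (simp add: mult.commute)
      then show ?thesis using that by (simp add: divide_le_eq)
    qed
    finally show ?thesis .
  qed
  have riem: "\<bar>\<sigma> s - S s\<bar> \<le> B0 * \<delta>^2 / N" if s: "\<bar>s\<bar> \<le> \<bar>a\<bar> + R" for s
  proof -
    have tel: "\<sigma> s = (\<Sum>k<N. P (s + real (Suc k) * h) - P (s + real k * h))"
      using sum_lessThan_telescope[of "\<lambda>k. P (s + real k * h)" N] N1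
      by (simp add: \<sigma>_def h_def)
    have each: "\<bar>P (s + real (Suc k) * h) - P (s + real k * h) - h * \<rho> (s + real k * h)\<bar> \<le> B0 * h^2"
      if k: "k < N" for k
    proof -
      define c where "c = s + real k * h"
      have cb: "\<bar>c\<bar> \<le> \<bar>a\<bar> + R + \<bar>\<delta>\<bar>" unfolding c_def using abs_triangle_ineq[of s "real k * h"] kh[OF k] s by linarith
      have "\<bar>P (c + h) - P c - \<rho> c * ((c + h) - c)\<bar> \<le> B0 * ((c + h) - c)^2"
      proof (rule taylor1_bound[where f'=\<rho>])
        fix x assume x: "\<bar>x - c\<bar> \<le> \<bar>c + h - c\<bar>"
        have xc: "\<bar>x - c\<bar> \<le> \<bar>\<delta>\<bar>" using x hb by simp
        have "\<bar>x\<bar> \<le> \<bar>c\<bar> + \<bar>x - c\<bar>" using abs_triangle_ineq[of c "x - c"] by simp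
        then have "\<bar>x\<bar> < M" using cb xc unfolding M_def by linarith
        then show "DERIV P x :> \<rho> x" by (rule Pder)
        show "\<bar>\<rho> x - \<rho> c\<bar> \<le> B0 * \<bar>x - c\<bar>" using cb xc by (intro rlip) (unfold M_def, linarith)
      qed (rule B0)
      moreover have "s + real (Suc k) * h = c + h" unfolding c_def by (simp add: algebra_simps)
      ultimately show ?thesis unfolding c_def by (simp add: mult.commute add.assoc)
    qed
    have "\<sigma> s - S s = (\<Sum>k<N. P (s + real (Suc k) * h) - P (s + real k * h) - h * \<rho> (s + real k * h))"
      unfolding tel S_def by (simp add: sum_subtractf)
    then have "\<bar>\<sigma> s - S s\<bar> \<le> (\<Sum>k<N. \<bar>P (s + real (Suc k) * h) - P (s + real k * h) - h * \<rho> (s + real k * h)\<bar>)"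
      by (simp add: sum_abs)
    also have "\<dots> \<le> (\<Sum>k<N. B0 * h^2)" by (rule sum_mono) (use each in simp)
    also have "\<dots> = B0 * \<delta>^2 / N" unfolding h_def using N1 by (simp add: power2_eq_square)
    finally show ?thesis .
  qed
  define q where "q = (\<lambda>u. (- 2 * S a / (t^2 * \<kappa>)) + (1 / (t^2 * \<kappa>)) *
      ((\<Sum>k<N. h * \<rho> (t * u + (a + real k * h))) + (\<Sum>k<N. h * \<rho> ((- t) * u + (a + real k * h)))))"
  have qQ: "q \<in> Q1 \<rho>" unfolding q_def by (intro Q1_affine Q1_add Q1_sum)
  have qS: "q u = (S (a + t * u) + S (a - t * u) - 2 * S a) / (t^2 * \<kappa>)" for u
  proof -
    have 1: "(\<Sum>k<N. h * \<rho> (t * u + (a + real k * h))) = S (a + t * u)"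
      unfolding S_def by (rule sum.cong) (simp_all add: algebra_simps)
    have 2: "(\<Sum>k<N. h * \<rho> ((- t) * u + (a + real k * h))) = S (a - t * u)"
      unfolding S_def by (rule sum.cong) (simp_all add: algebra_simps)
    show ?thesis unfolding q_def 1 2 using t0 \<kappa> by (simp add: field_simps)
  qed
  have "\<bar>q u - u^2\<bar> \<le> \<eta>" if u: "\<bar>u\<bar> \<le> R" for u
  proof -
    define v where "v = t * u"
    have vR: "\<bar>v\<bar> \<le> R"
    proof -
      have "\<bar>v\<bar> = t * \<bar>u\<bar>" unfolding v_def using t0 by (simp add: abs_mult)
      also have "\<dots> \<le> 1 * R" using t1 u t0 by (intro mult_mono) auto
      finally show ?thesis by simp
    qed
    define E1 where "E1 = \<sigma>(a+v) + \<sigma>(a-v) - 2*\<sigma> a - \<kappa> * v^2"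
    define E2 where "E2 = (S (a+v) - \<sigma>(a+v)) + (S (a-v) - \<sigma>(a-v)) - 2 * (S a - \<sigma> a)"
    have E1b: "\<bar>E1\<bar> \<le> 4*Lp*\<bar>v\<bar>^3" unfolding E1_def using phi[OF vR] .
    have "\<bar>a + v\<bar> \<le> \<bar>a\<bar> + R" using abs_triangle_ineq[of a v] vR by linarith
    moreover have "\<bar>a - v\<bar> \<le> \<bar>a\<bar> + R" using abs_triangle_ineq4[of a v] vR by linarith
    moreover have "\<bar>a\<bar> \<le> \<bar>a\<bar> + R" using R by simp
    ultimately have r1: "\<bar>\<sigma> (a+v) - S (a+v)\<bar> \<le> B0 * \<delta>^2 / N" and r2: "\<bar>\<sigma> (a-v) - S (a-v)\<bar> \<le> B0 * \<delta>^2 / N"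
      and r3: "\<bar>\<sigma> a - S a\<bar> \<le> B0 * \<delta>^2 / N" using riem by blast+
    have eq4: "4 * B0 * \<delta>^2 / N = 4 * (B0 * \<delta>^2 / N)" by simp
    have E2b: "\<bar>E2\<bar> \<le> 4 * B0 * \<delta>^2 / N" unfolding E2_def eq4
      by (rule abs3[OF r1 r2 r3])
    have v3: "\<bar>v\<bar>^3 \<le> t^3 * R^3"
    proof -
      have "\<bar>v\<bar>^3 = t^3 * \<bar>u\<bar>^3" unfolding v_def using t0 by (simp add: abs_mult power_mult_distrib)
      also have "\<dots> \<le> t^3 * R^3" using u t0 by (intro mult_left_mono power_mono) simp_all
      finally show ?thesis .
    qed
    have "4*Lp*\<bar>v\<bar>^3 \<le> 4*Lp*(t^3 * R^3)" using v3 Lnn by (simp add: mult_left_mono)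
    also have "\<dots> = (t^2 / 2) * (8 * Lp * R^3 * t)" by (simp add: power2_eq_square power3_eq_cube)
    also have "\<dots> \<le> (t^2 / 2) * (\<eta> * \<bar>\<kappa>\<bar>)" using tR by (intro mult_left_mono) simp_all
    also have "\<dots> = \<eta> * T / 2" unfolding T_def by simp
    finally have E1c: "\<bar>E1\<bar> \<le> \<eta> * T / 2" using E1b by linarith
    have E2c: "\<bar>E2\<bar> \<le> \<eta> * T / 2" using E2b NT by linarith
    have "q u - u^2 = (E1 + E2) / (t^2 * \<kappa>)"
      unfolding qS E1_def E2_def v_def using t0 \<kappa> by (simp add: field_simps power2_eq_square)
    then have "\<bar>q u - u^2\<bar> = \<bar>E1 + E2\<bar> / T" unfolding T_def by (simp add: abs_mult)
    also have "\<dots> \<le> (\<eta> * T) / T" using E1c E2c T0 by (intro divide_right_mono) simp_all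
    also have "\<dots> = \<eta>" using T0 by simp
    finally show ?thesis .
  qed
  then show ?thesis using qQ by blast
qed
end


fun NN :: "(real \<Rightarrow> real) \<Rightarrow> nat \<Rightarrow> (real^'n::finite \<Rightarrow> real) set" where
  "NN \<rho> 0 = {g. \<exists>b w. \<forall>x. g x = b + (\<Sum>j\<in>UNIV. w j * x $ j)}"
| "NN \<rho> (Suc L) = {g. \<exists>c (d::nat) V h. (\<forall>j<d. h j \<in> NN \<rho> L) \<and>
       (\<forall>x. g x = c + (\<Sum>j<d. V j * \<rho> (h j x)))}"

lemma NN_const: "(\<lambda>x. c) \<in> NN \<rho> L"
proof (cases L)
  case 0 then show ?thesis by (auto intro!: exI[of _ c] exI[of _ "\<lambda>j. 0"])
next
  case (Suc L') show ?thesis unfolding Suc NN.simps mem_Collect_eq by (rule exI[of _ c], rule exI[of _ "0::nat"]) simp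
qed

lemma NN_affine: "g \<in> NN \<rho> L \<Longrightarrow> (\<lambda>x. c + s * g x) \<in> NN \<rho> L"
proof (cases L)
  case 0
  assume "g \<in> NN \<rho> L"
  then obtain b w where g0: "\<forall>x. g x = b + (\<Sum>j\<in>UNIV. w j * x $ j)"
    using 0 by (simp only: NN.simps mem_Collect_eq) blast
  note g = g0[rule_format]
  show ?thesis using 0
    by (auto intro!: exI[of _ "c + s * b"] exI[of _ "\<lambda>j. s * w j"] simp: g algebra_simps sum_distrib_left)
next
  case (Suc L')
  assume "g \<in> NN \<rho> L"
  then obtain c0 d V h where h: "\<forall>j<(d::nat). h j \<in> NN \<rho> L'" and g: "\<forall>x. g x = c0 + (\<Sum>j<d. V j * \<rho> (h j x))"
    using Suc by (simp only: NN.simps mem_Collect_eq) blast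
  show ?thesis using Suc h
    by (auto intro!: exI[of _ "c + s * c0"] exI[of _ d] exI[of _ "\<lambda>j. s * V j"] exI[of _ h]
             simp: g[rule_format] algebra_simps sum_distrib_left)
qed

lemma NN_add: "g1 \<in> NN \<rho> L \<Longrightarrow> g2 \<in> NN \<rho> L \<Longrightarrow> (\<lambda>x. g1 x + g2 x) \<in> NN \<rho> L"
proof (cases L)
  case 0
  assume "g1 \<in> NN \<rho> L" "g2 \<in> NN \<rho> L"
  then obtain b1 w1 b2 w2 where g10: "\<forall>x. g1 x = b1 + (\<Sum>j\<in>UNIV. w1 j * x $ j)"
    and g20: "\<forall>x. g2 x = b2 + (\<Sum>j\<in>UNIV. w2 j * x $ j)" using 0 by (simp only: NN.simps mem_Collect_eq) blast
  note g1 = g10[rule_format] and g2 = g20[rule_format]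
  show ?thesis using 0
    by (auto intro!: exI[of _ "b1 + b2"] exI[of _ "\<lambda>j. w1 j + w2 j"] simp: g1 g2 algebra_simps sum.distrib)
next
  case (Suc L')
  assume "g1 \<in> NN \<rho> L" "g2 \<in> NN \<rho> L"
  then obtain c1 d1 V1 h1 c2 d2 V2 h2 where h1: "\<forall>j<(d1::nat). h1 j \<in> NN \<rho> L'"
    and g1: "\<forall>x. g1 x = c1 + (\<Sum>j<d1. V1 j * \<rho> (h1 j x))"
    and h2: "\<forall>j<(d2::nat). h2 j \<in> NN \<rho> L'"
    and g2: "\<forall>x. g2 x = c2 + (\<Sum>j<d2. V2 j * \<rho> (h2 j x))"
    using Suc by (simp only: NN.simps mem_Collect_eq) blast
  define V where "V = (\<lambda>j. if j < d1 then V1 j else V2 (j - d1))"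
  define h where "h = (\<lambda>j. if j < d1 then h1 j else h2 (j - d1))"
  have hN: "\<forall>j<d1+d2. h j \<in> NN \<rho> L'" using h1 h2 by (auto simp: h_def)
  have "g1 x + g2 x = (c1 + c2) + (\<Sum>j<d1+d2. V j * \<rho> (h j x))" for x
  proof -
    have e1: "(\<Sum>j<d1. V j * \<rho> (h j x)) = (\<Sum>j<d1. V1 j * \<rho> (h1 j x))"
      by (rule sum.cong) (auto simp: V_def h_def)
    have e2: "(\<Sum>j<d2. V (d1+j) * \<rho> (h (d1+j) x)) = (\<Sum>j<d2. V2 j * \<rho> (h2 j x))"
      by (rule sum.cong) (auto simp: V_def h_def)
    show ?thesis unfolding sum_split_nat e1 e2 g1[rule_format] g2[rule_format] by simp
  qed
  then show ?thesis using Suc hN by auto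
qed

lemma NN_Q1: "q \<in> Q1 \<rho> \<Longrightarrow> g \<in> NN \<rho> L \<Longrightarrow> (\<lambda>x. q (g x)) \<in> NN \<rho> (Suc L)"
proof -
  assume "q \<in> Q1 \<rho>" and g: "g \<in> NN \<rho> L"
  then obtain c0 d c \<alpha> \<beta> where q: "\<And>u. q u = c0 + (\<Sum>k<(d::nat). c k * \<rho> (\<alpha> k * u + \<beta> k))"
    unfolding Q1_def by auto
  have "\<forall>j<d. (\<lambda>x. \<beta> j + \<alpha> j * g x) \<in> NN \<rho> L" using g by (auto intro: NN_affine)
  then show ?thesis
    by (auto intro!: exI[of _ c0] exI[of _ d] exI[of _ c] exI[of _ "\<lambda>j x. \<beta> j + \<alpha> j * g x"]
             simp: q add.commute)
qed

lemma NN_cont: "continuous_on UNIV \<rho> \<Longrightarrow> g \<in> NN \<rho> L \<Longrightarrow> continuous_on UNIV g"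
proof (induct L arbitrary: g)
  case 0
  then obtain b w where g0: "\<forall>x. g x = b + (\<Sum>j\<in>UNIV. w j * x $ j)"
    by (simp only: NN.simps mem_Collect_eq) blast
  have g: "g = (\<lambda>x. b + (\<Sum>j\<in>UNIV. w j * x $ j))" using g0 by auto
  show ?case unfolding g by (intro continuous_intros)
next
  case (Suc L)
  then obtain c d V h where h: "\<forall>j<d. h j \<in> NN \<rho> L" and g0: "\<forall>x. g x = c + (\<Sum>j<(d::nat). V j * \<rho> (h j x))"
    by (simp only: NN.simps mem_Collect_eq) blast
  have g: "g = (\<lambda>x. c + (\<Sum>j<(d::nat). V j * \<rho> (h j x)))" using g0 by auto
  have hc: "continuous_on UNIV (h j)" if "j < d" for j using Suc h that by blast
  have "continuous_on UNIV (\<lambda>x. \<rho> (h j x))" if "j < d" for j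
    using continuous_on_compose2[OF Suc(2) hc[OF that]] by simp
  then show ?case unfolding g by (intro continuous_intros) auto
qed

lemma sm_hidden_snoc:
  "sm_hidden \<rho> (hs @ [(d, W, b)]) z = (\<lambda>i. \<rho> (b i + (\<Sum>j<d. W i j * sm_hidden \<rho> hs z j)))"
  by (induct \<rho> hs z rule: sm_hidden.induct) auto



lemma choice_lt: "\<forall>j<(d::nat). \<exists>y. P j y \<Longrightarrow> \<exists>f. \<forall>j<d. P j (f j)"
proof -
  assume a0: "\<forall>j<d. \<exists>y. P j y"
  have a: "\<exists>y. P j y" if "j < d" for j using a0 that by blast
  have b: "P j (SOME y. P j y)" if "j < d" for j using a[OF that] by (rule someI_ex)
  show ?thesis by (rule exI[of _ "\<lambda>j. SOME y. P j y"]) (simp add: b)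
qed

lemma realize:
  "\<forall>(d::nat) h. (\<forall>j<d. h j \<in> NN \<rho> L) \<longrightarrow>
     (\<exists>(W0::nat \<Rightarrow> 'n::finite \<Rightarrow> real) b0 hs. \<forall>x::real^'n. \<forall>j<d.
        sm_hidden \<rho> hs (\<lambda>i. \<rho> (b0 i + (\<Sum>j\<in>UNIV. W0 i j * x $ j))) j = \<rho> (h j x))"
proof (induct L)
  case 0
  show ?case
  proof (intro allI impI)
    fix d :: nat and h :: "nat \<Rightarrow> real^'n \<Rightarrow> real"
    assume "\<forall>j<d. h j \<in> NN \<rho> 0"
    note hyp = this
    have "\<forall>j<d. \<exists>p. \<forall>x. h j x = fst p + (\<Sum>k\<in>UNIV. snd p k * x $ k)"
    proof (intro allI impI)
      fix j assume that: "j < d"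
      have "h j \<in> NN \<rho> 0" using hyp that by blast
      then obtain b w where "\<forall>x. h j x = b + (\<Sum>k\<in>UNIV. w k * x $ k)"
        by (simp only: NN.simps mem_Collect_eq) blast
      then show "\<exists>p. \<forall>x. h j x = fst p + (\<Sum>k\<in>UNIV. snd p k * x $ k)" by (intro exI[of _ "(b, w)"]) simp
    qed
    from choice_lt[OF this] obtain f where f: "\<forall>j<d. \<forall>x. h j x = fst (f j) + (\<Sum>k\<in>UNIV. snd (f j) k * x $ k)"
      by blast
    define B where "B = (\<lambda>j. fst (f j))"
    define Wf where "Wf = (\<lambda>j. snd (f j))"
    have BW: "\<And>j. j < d \<Longrightarrow> (\<forall>x. h j x = B j + (\<Sum>k\<in>UNIV. Wf j k * x $ k))"
      using f unfolding B_def Wf_def by blast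
    show "\<exists>(W0::nat \<Rightarrow> 'n::finite \<Rightarrow> real) b0 hs. \<forall>x::real^'n. \<forall>j<d.
        sm_hidden \<rho> hs (\<lambda>i. \<rho> (b0 i + (\<Sum>j\<in>UNIV. W0 i j * x $ j))) j = \<rho> (h j x)"
      by (rule exI[of _ Wf], rule exI[of _ B], rule exI[of _ "[]"]) (simp add: BW)
  qed
next
  case (Suc L)
  show ?case
  proof (intro allI impI)
    fix d :: nat and h :: "nat \<Rightarrow> real^'n \<Rightarrow> real"
    assume "\<forall>j<d. h j \<in> NN \<rho> (Suc L)"
    note hyp = this
    have "\<forall>j<d. \<exists>p. (\<forall>k<(fst (snd p)::nat). snd (snd (snd p)) k \<in> NN \<rho> L) \<and>
        (\<forall>x. h j x = fst p + (\<Sum>k<fst (snd p). fst (snd (snd p)) k * \<rho> (snd (snd (snd p)) k x)))"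
    proof (intro allI impI)
      fix j assume that: "j < d"
      have "h j \<in> NN \<rho> (Suc L)" using hyp that by blast
      then obtain c and dd :: nat and V g where "(\<forall>k<dd. g k \<in> NN \<rho> L) \<and>
        (\<forall>x. h j x = c + (\<Sum>k<dd. V k * \<rho> (g k x)))"
        by (simp only: NN.simps mem_Collect_eq) blast
      then show "\<exists>p. (\<forall>k<(fst (snd p)::nat). snd (snd (snd p)) k \<in> NN \<rho> L) \<and>
        (\<forall>x. h j x = fst p + (\<Sum>k<fst (snd p). fst (snd (snd p)) k * \<rho> (snd (snd (snd p)) k x)))"
        by (intro exI[of _ "(c, dd, V, g)"]) simp
    qed
    from choice_lt[OF this] obtain f where f: "\<forall>j<d. (\<forall>k<(fst (snd (f j))::nat). snd (snd (snd (f j))) k \<in> NN \<rho> L) \<and>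
        (\<forall>x. h j x = fst (f j) + (\<Sum>k<fst (snd (f j)). fst (snd (snd (f j))) k * \<rho> (snd (snd (snd (f j))) k x)))"
      by blast
    define cc where "cc = (\<lambda>j. fst (f j))"
    define dd where "dd = (\<lambda>j. fst (snd (f j)))"
    define VV where "VV = (\<lambda>j. fst (snd (snd (f j))))"
    define gg where "gg = (\<lambda>j. snd (snd (snd (f j))))"
    have H: "\<And>j. j < d \<Longrightarrow> (\<forall>k<dd j. gg j k \<in> NN \<rho> L) \<and>
                   (\<forall>x. h j x = cc j + (\<Sum>k<dd j. VV j k * \<rho> (gg j k x)))"
      using f unfolding cc_def dd_def VV_def gg_def by blast
    define D where "D = Suc (\<Sum>j<d. dd j)"
    have D0: "0 < D" by (simp add: D_def)
    have ddD: "dd j < D" if "j < d" for j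
    proof -
      have "dd j \<le> (\<Sum>j<d. dd j)" using that by (intro member_le_sum) auto
      then show ?thesis by (simp add: D_def)
    qed
    define \<psi> where "\<psi> = (\<lambda>i. if i mod D < dd (i div D) then gg (i div D) (i mod D) else (\<lambda>x. 0))"
    have \<psi>N: "\<forall>i<d*D. \<psi> i \<in> NN \<rho> L"
    proof (intro allI impI)
      fix i assume i: "i < d * D"
      then have "i div D < d" by (simp add: less_mult_imp_div_less)
      then show "\<psi> i \<in> NN \<rho> L" using H[of "i div D"] by (auto simp: \<psi>_def NN_const)
    qed
    obtain W0 b0 hs where Z: "\<forall>x::real^'n. \<forall>i<d*D.
        sm_hidden \<rho> hs (\<lambda>i. \<rho> (b0 i + (\<Sum>j\<in>UNIV. W0 i j * x $ j))) i = \<rho> (\<psi> i x)"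
      using Suc[rule_format, of "d*D" \<psi>] \<psi>N by blast
    define W' where "W' = (\<lambda>j i. if i div D = j \<and> i mod D < dd j then VV j (i mod D) else 0)"
    show "\<exists>(W0::nat \<Rightarrow> 'n::finite \<Rightarrow> real) b0 hs. \<forall>x::real^'n. \<forall>j<d.
        sm_hidden \<rho> hs (\<lambda>i. \<rho> (b0 i + (\<Sum>j\<in>UNIV. W0 i j * x $ j))) j = \<rho> (h j x)"
    proof (rule exI[of _ W0], rule exI[of _ b0], rule exI[of _ "hs @ [(d*D, W', cc)]"], intro allI impI)
      fix x :: "real^'n" and j assume j: "j < d"
      define z1 where "z1 = (\<lambda>i. \<rho> (b0 i + (\<Sum>j\<in>UNIV. W0 i j * x $ j)))"
      define F where "F = (\<lambda>i. W' j i * \<rho> (\<psi> i x))"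
      have s1: "(\<Sum>i<d*D. W' j i * sm_hidden \<rho> hs z1 i) = (\<Sum>i<d*D. F i)"
        unfolding F_def z1_def by (rule sum.cong) (use Z in auto)
      have sub: "(\<lambda>k. j*D + k) ` {..<dd j} \<subseteq> {..<d*D}"
      proof
        fix i assume "i \<in> (\<lambda>k. j*D + k) ` {..<dd j}"
        then obtain k where k: "k < dd j" "i = j*D + k" by auto
        have "j*D + k < j*D + D" using k ddD[OF j] by simp
        also have "\<dots> = Suc j * D" by simp
        also have "\<dots> \<le> d * D" using j by (intro mult_right_mono) auto
        finally show "i \<in> {..<d*D}" using k by simp
      qed
      have zero: "F i = 0" if "i \<in> {..<d*D} - (\<lambda>k. j*D + k) ` {..<dd j}" for i
      proof (rule ccontr)
        assume "F i \<noteq> 0"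
        then have c: "i div D = j" "i mod D < dd j" unfolding F_def W'_def by (auto split: if_splits)
        have "i = j * D + i mod D" using c(1) div_mult_mod_eq[of i D] by simp
        then have "i \<in> (\<lambda>k. j*D + k) ` {..<dd j}" using c(2) by blast
        then show False using that by blast
      qed
      have "(\<Sum>i<d*D. F i) = (\<Sum>i\<in>(\<lambda>k. j*D + k) ` {..<dd j}. F i)"
        by (rule sum.mono_neutral_right) (simp, rule sub, use zero in blast)
      also have "\<dots> = (\<Sum>k<dd j. F (j*D + k))"
        by (rule sum.reindex[unfolded comp_def]) (simp add: inj_on_def)
      also have "\<dots> = (\<Sum>k<dd j. VV j k * \<rho> (gg j k x))"
      proof (rule sum.cong)
        fix k assume "k \<in> {..<dd j}"
        then have k: "k < D" "k < dd j" using ddD[OF j] by auto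
        have dm: "(j*D + k) div D = j" "(j*D + k) mod D = k" using k D0 by simp_all
        show "F (j*D + k) = VV j k * \<rho> (gg j k x)"
          unfolding F_def W'_def \<psi>_def dm using k by simp
      qed simp
      finally have "(\<Sum>i<d*D. W' j i * sm_hidden \<rho> hs z1 i) = (\<Sum>k<dd j. VV j k * \<rho> (gg j k x))"
        using s1 by simp
      then show "sm_hidden \<rho> (hs @ [(d*D, W', cc)]) z1 j = \<rho> (h j x)"
        using H[OF j] unfolding sm_hidden_snoc by simp
    qed
  qed
qed



definition AP :: "(real \<Rightarrow> real) \<Rightarrow> (real^'n) set \<Rightarrow> nat \<Rightarrow> (real^'n::finite \<Rightarrow> real) set" where
  "AP \<rho> K L = {f. \<forall>e>0. \<exists>g\<in>NN \<rho> L. \<forall>x\<in>K. \<bar>f x - g x\<bar> \<le> e}"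

lemma Q1_rho: "(\<lambda>u. \<rho> (t * u + b)) \<in> Q1 \<rho>"
  unfolding Q1_def
  by (rule CollectI, rule exI[of _ 0], rule exI[of _ "1::nat"], rule exI[of _ "\<lambda>k. 1"],
      rule exI[of _ "\<lambda>k. t"], rule exI[of _ "\<lambda>k. b"]) simp

lemma AP_NN: "g \<in> NN \<rho> L \<Longrightarrow> g \<in> AP \<rho> K L"
  unfolding AP_def by (intro CollectI allI impI bexI[of _ g]) simp_all

lemma APD: "f \<in> AP \<rho> K L \<Longrightarrow> 0 < e \<Longrightarrow> \<exists>g\<in>NN \<rho> L. \<forall>x\<in>K. \<bar>f x - g x\<bar> \<le> e"
  unfolding AP_def by blast

lemma AP_add: assumes "f1 \<in> AP \<rho> K L" "f2 \<in> AP \<rho> K L"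
  shows "(\<lambda>x. f1 x + f2 x) \<in> AP \<rho> K L"
  unfolding AP_def
proof (intro CollectI allI impI)
  fix e :: real assume e: "0 < e"
  obtain g1 where g1: "g1 \<in> NN \<rho> L" "\<forall>x\<in>K. \<bar>f1 x - g1 x\<bar> \<le> e/2"
    using APD[OF assms(1) half_gt_zero[OF e]] by blast
  obtain g2 where g2: "g2 \<in> NN \<rho> L" "\<forall>x\<in>K. \<bar>f2 x - g2 x\<bar> \<le> e/2"
    using APD[OF assms(2) half_gt_zero[OF e]] by blast
  have "\<forall>x\<in>K. \<bar>(f1 x + f2 x) - (g1 x + g2 x)\<bar> \<le> e"
  proof
    fix x assume "x \<in> K"
    then have "\<bar>f1 x - g1 x\<bar> \<le> e/2" "\<bar>f2 x - g2 x\<bar> \<le> e/2" using g1 g2 by auto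
    moreover have "\<bar>(f1 x + f2 x) - (g1 x + g2 x)\<bar> \<le> \<bar>f1 x - g1 x\<bar> + \<bar>f2 x - g2 x\<bar>"
      by (rule order_trans[OF _ abs_triangle_ineq]) simp
    ultimately show "\<bar>(f1 x + f2 x) - (g1 x + g2 x)\<bar> \<le> e" by linarith
  qed
  moreover have N: "(\<lambda>x. g1 x + g2 x) \<in> NN \<rho> L" using g1 g2 by (intro NN_add)
  ultimately show "\<exists>g\<in>NN \<rho> L. \<forall>x\<in>K. \<bar>f1 x + f2 x - g x\<bar> \<le> e" by (intro bexI[OF _ N]) simp
qed

lemma AP_affine: assumes "f \<in> AP \<rho> K L"
  shows "(\<lambda>x. c + s * f x) \<in> AP \<rho> K L"
  unfolding AP_def
proof (intro CollectI allI impI)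
  fix e :: real assume e: "0 < e"
  have e': "0 < e / (\<bar>s\<bar> + 1)" using e by simp
  obtain g where g: "g \<in> NN \<rho> L" "\<forall>x\<in>K. \<bar>f x - g x\<bar> \<le> e / (\<bar>s\<bar> + 1)"
    using APD[OF assms e'] by blast
  have "\<forall>x\<in>K. \<bar>(c + s * f x) - (c + s * g x)\<bar> \<le> e"
  proof
    fix x assume "x \<in> K"
    then have h: "\<bar>f x - g x\<bar> \<le> e / (\<bar>s\<bar> + 1)" using g by auto
    have "\<bar>(c + s * f x) - (c + s * g x)\<bar> = \<bar>s\<bar> * \<bar>f x - g x\<bar>" by (simp add: abs_mult[symmetric] algebra_simps)
    also have "\<dots> \<le> (\<bar>s\<bar> + 1) * (e / (\<bar>s\<bar> + 1))" using h by (intro mult_mono) auto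
    also have "\<dots> = e" by simp
    finally show "\<bar>(c + s * f x) - (c + s * g x)\<bar> \<le> e" .
  qed
  moreover have N: "(\<lambda>x. c + s * g x) \<in> NN \<rho> L" using g by (intro NN_affine)
  ultimately show "\<exists>g\<in>NN \<rho> L. \<forall>x\<in>K. \<bar>c + s * f x - g x\<bar> \<le> e" by (intro bexI[OF _ N]) simp
qed

locale act2 = act +
  fixes a0 b0 :: real
  assumes nc: "\<rho>' a0 \<noteq> \<rho>' b0"
begin

lemma NN_bdd:
  assumes K: "compact K" and g: "g \<in> NN \<rho> L"
  shows "\<exists>B\<ge>0. \<forall>x\<in>K. \<bar>g x\<bar> \<le> B"
proof -
  have "continuous_on UNIV g" using NN_cont[OF rho_cont g] .
  then have "continuous_on K g" by (rule continuous_on_subset) simp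
  then have "compact (g ` K)" using K by (rule compact_continuous_image)
  then have "bounded (g ` K)" by (rule compact_imp_bounded)
  then obtain B where B: "B > 0" "\<forall>y\<in>g ` K. norm y \<le> B" unfolding bounded_pos by blast
  then show ?thesis by (intro exI[of _ B]) auto
qed

lemma AP_Suc:
  assumes K: "compact K" and f: "f \<in> AP \<rho> K L"
  shows "f \<in> AP \<rho> K (Suc L)"
  unfolding AP_def
proof (intro CollectI allI impI)
  fix e :: real assume e: "0 < e"
  obtain a1 where r0: "\<rho>' a1 \<noteq> 0" using nc by (cases "\<rho>' a0 = 0") auto
  define r where "r = \<rho>' a1"
  have r: "r \<noteq> 0" "0 < \<bar>r\<bar>" using r0 by (auto simp: r_def)
  obtain g where g: "g \<in> NN \<rho> L" "\<forall>x\<in>K. \<bar>f x - g x\<bar> \<le> e/2"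
    using APD[OF f half_gt_zero[OF e]] by blast
  obtain B where B: "0 \<le> B" "\<forall>x\<in>K. \<bar>g x\<bar> \<le> B" using NN_bdd[OF K g(1)] by blast
  define D where "D = 2 * (Lp + 1) * (B^2 + 1)"
  define \<tau> where "\<tau> = e * \<bar>r\<bar> / D"
  have l1: "0 < Lp + 1" using Lnn by simp
  have b1: "0 < B^2 + 1" by (simp add: add_nonneg_pos)
  have den: "0 < 2 * (Lp + 1) * (B^2 + 1)" using l1 b1 by simp
  have D0: "0 < D" using den by (simp add: D_def)
  have \<tau>0: "0 < \<tau>" unfolding \<tau>_def using e r D0 by simp
  have \<tau>eq': "\<tau> * D = e * \<bar>r\<bar>" unfolding \<tau>_def using D0 by simp
  have \<tau>eq: "\<tau> * (2 * (Lp + 1) * (B^2 + 1)) = e * \<bar>r\<bar>" using \<tau>eq' by (simp add: D_def)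
  define q where "q = (\<lambda>u. (- \<rho> a1 / (\<tau> * r)) + (1 / (\<tau> * r)) * \<rho> (\<tau> * u + a1))"
  have qQ: "q \<in> Q1 \<rho>" unfolding q_def by (intro Q1_affine Q1_rho)
  have g'N: "(\<lambda>x. q (g x)) \<in> NN \<rho> (Suc L)" by (rule NN_Q1[OF qQ g(1)])
  have "\<forall>x\<in>K. \<bar>f x - q (g x)\<bar> \<le> e"
  proof
    fix x assume x: "x \<in> K"
    define s where "s = \<tau> * g x"
    have tb: "\<bar>\<rho> (a1 + s) - \<rho> a1 - r * (a1 + s - a1)\<bar> \<le> Lp * (a1 + s - a1)^2"
      unfolding r_def by (rule taylor1_bound[OF der lip Lnn])
    have qeq: "q (g x) - g x = (\<rho> (a1 + s) - \<rho> a1 - r * s) / (\<tau> * r)"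
      unfolding q_def s_def using \<tau>0 r by (simp add: field_simps add.commute)
    have gB: "(g x)^2 \<le> B^2"
    proof -
      have "\<bar>g x\<bar>^2 \<le> B^2" using B x by (intro power_mono) auto
      then show ?thesis by simp
    qed
    have "\<bar>q (g x) - g x\<bar> = \<bar>\<rho> (a1 + s) - \<rho> a1 - r * s\<bar> / (\<tau> * \<bar>r\<bar>)"
      unfolding qeq using \<tau>0 by (simp add: abs_mult)
    also have "\<dots> \<le> Lp * s^2 / (\<tau> * \<bar>r\<bar>)" using tb \<tau>0 r by (intro divide_right_mono) simp_all
    also have "\<dots> = (Lp * \<tau> * (g x)^2) / \<bar>r\<bar>" unfolding s_def using \<tau>0 by (simp add: power2_eq_square)
    also have "\<dots> \<le> (\<tau> * ((Lp + 1) * (B^2 + 1))) / \<bar>r\<bar>"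
    proof (rule divide_right_mono)
      have "Lp * (g x)^2 \<le> (Lp + 1) * (B^2 + 1)" using gB Lnn by (intro mult_mono) auto
      then have "\<tau> * (Lp * (g x)^2) \<le> \<tau> * ((Lp + 1) * (B^2 + 1))" using \<tau>0 by (intro mult_left_mono) auto
      then show "Lp * \<tau> * (g x)^2 \<le> \<tau> * ((Lp + 1) * (B^2 + 1))" by (simp add: algebra_simps)
    qed simp
    also have "\<dots> = e / 2" using \<tau>eq r by (simp add: field_simps)
    finally have h2: "\<bar>q (g x) - g x\<bar> \<le> e/2" .
    have "\<bar>f x - g x\<bar> \<le> e/2" using g x by auto
    then show "\<bar>f x - q (g x)\<bar> \<le> e" using h2 by linarith
  qed
  then show "\<exists>g\<in>NN \<rho> (Suc L). \<forall>x\<in>K. \<bar>f x - g x\<bar> \<le> e" by (intro bexI[OF _ g'N]) simp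
qed

end


context act2 begin

lemma AP_sq:
  assumes K: "compact K" and f: "f \<in> AP \<rho> K L"
  shows "(\<lambda>x. (f x)^2) \<in> AP \<rho> K (Suc L)"
  unfolding AP_def
proof (intro CollectI allI impI)
  fix e :: real assume e: "0 < e"
  obtain g1 where g1: "g1 \<in> NN \<rho> L" "\<forall>x\<in>K. \<bar>f x - g1 x\<bar> \<le> 1"
    using APD[OF f zero_less_one] by blast
  obtain B1 where B1: "0 \<le> B1" "\<forall>x\<in>K. \<bar>g1 x\<bar> \<le> B1" using NN_bdd[OF K g1(1)] by blast
  have fB: "\<bar>f x\<bar> \<le> B1 + 1" if "x \<in> K" for x
  proof -
    have "\<bar>f x\<bar> \<le> \<bar>g1 x\<bar> + \<bar>f x - g1 x\<bar>" using abs_triangle_ineq[of "g1 x" "f x - g1 x"] by simp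
    then show ?thesis using g1 B1 that by fastforce
  qed
  define e' where "e' = min 1 (e / (2 * (2 * B1 + 3)))"
  have den: "0 < 2 * (2 * B1 + 3)" using B1 by simp
  have e'0: "0 < e'" unfolding e'_def using e den by simp
  have e'1: "e' \<le> 1" unfolding e'_def by simp
  have e'2: "e' * (2 * B1 + 3) \<le> e / 2"
  proof -
    have "e' \<le> e / (2 * (2 * B1 + 3))" unfolding e'_def by simp
    then have "e' * (2 * (2 * B1 + 3)) \<le> e" using den by (simp add: le_divide_eq)
    then show ?thesis by (simp add: algebra_simps)
  qed
  obtain g where g: "g \<in> NN \<rho> L" "\<forall>x\<in>K. \<bar>f x - g x\<bar> \<le> e'"
    using APD[OF f e'0] by blast
  obtain q where q: "q \<in> Q1 \<rho>" "\<forall>u. \<bar>u\<bar> \<le> B1 + 2 \<longrightarrow> \<bar>q u - u^2\<bar> \<le> e/2"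
    using sq_approx[OF nc, of "B1 + 2" "e/2"] B1 e by auto
  have g'N: "(\<lambda>x. q (g x)) \<in> NN \<rho> (Suc L)" by (rule NN_Q1[OF q(1) g(1)])
  have "\<forall>x\<in>K. \<bar>(f x)^2 - q (g x)\<bar> \<le> e"
  proof
    fix x assume x: "x \<in> K"
    have d: "\<bar>f x - g x\<bar> \<le> e'" using g x by auto
    have fb: "\<bar>f x\<bar> \<le> B1 + 1" using fB[OF x] .
    have gb: "\<bar>g x\<bar> \<le> B1 + 2"
    proof -
      have "\<bar>g x\<bar> \<le> \<bar>f x\<bar> + \<bar>f x - g x\<bar>" using abs_triangle_ineq[of "f x" "g x - f x"] by (simp add: abs_minus_commute)
      then show ?thesis using fb d e'1 by linarith
    qed
    have s: "\<bar>f x + g x\<bar> \<le> 2 * B1 + 3" using abs_triangle_ineq[of "f x" "g x"] fb gb by linarith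
    have "\<bar>(f x)^2 - (g x)^2\<bar> = \<bar>f x - g x\<bar> * \<bar>f x + g x\<bar>"
      by (simp add: abs_mult[symmetric] power2_eq_square algebra_simps)
    also have "\<dots> \<le> e' * (2 * B1 + 3)" using d s by (intro mult_mono) auto
    also have "\<dots> \<le> e / 2" by (rule e'2)
    finally have h1: "\<bar>(f x)^2 - (g x)^2\<bar> \<le> e / 2" .
    have h2: "\<bar>q (g x) - (g x)^2\<bar> \<le> e/2" using q(2) gb by blast
    show "\<bar>(f x)^2 - q (g x)\<bar> \<le> e" using h1 h2 by linarith
  qed
  then show "\<exists>g\<in>NN \<rho> (Suc L). \<forall>x\<in>K. \<bar>(f x)^2 - g x\<bar> \<le> e" by (intro bexI[OF _ g'N]) simp
qed

lemma AP_mono: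
  assumes K: "compact K" and f: "f \<in> AP \<rho> K L"
  shows "f \<in> AP \<rho> K (L + k)"
  by (induct k) (simp_all add: f AP_Suc[OF K])

lemma AP_mono': "compact K \<Longrightarrow> f \<in> AP \<rho> K L \<Longrightarrow> L \<le> L' \<Longrightarrow> f \<in> AP \<rho> K L'"
  using AP_mono[of K f L "L' - L"] by simp

lemma AP_mult:
  assumes K: "compact K" and f: "f \<in> AP \<rho> K L1" and g: "g \<in> AP \<rho> K L2"
  shows "(\<lambda>x. f x * g x) \<in> AP \<rho> K (Suc (max L1 L2))"
proof -
  define m where "m = max L1 L2"
  have fm: "f \<in> AP \<rho> K m" using AP_mono'[OF K f] by (simp add: m_def)
  have gm: "g \<in> AP \<rho> K m" using AP_mono'[OF K g] by (simp add: m_def)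
  have s1: "(\<lambda>x. f x + g x) \<in> AP \<rho> K m" by (rule AP_add[OF fm gm])
  have "(\<lambda>x. 0 + (-1) * g x) \<in> AP \<rho> K m" by (rule AP_affine[OF gm])
  then have s2: "(\<lambda>x. f x + (0 + (-1) * g x)) \<in> AP \<rho> K m" by (rule AP_add[OF fm])
  have q1: "(\<lambda>x. (f x + g x)^2) \<in> AP \<rho> K (Suc m)" by (rule AP_sq[OF K s1])
  have q2: "(\<lambda>x. (f x + (0 + (-1) * g x))^2) \<in> AP \<rho> K (Suc m)" by (rule AP_sq[OF K s2])
  have r1: "(\<lambda>x. 0 + (1/4) * (f x + g x)^2) \<in> AP \<rho> K (Suc m)" by (rule AP_affine[OF q1])
  have r2: "(\<lambda>x. 0 + (-1/4) * (f x + (0 + (-1) * g x))^2) \<in> AP \<rho> K (Suc m)" by (rule AP_affine[OF q2])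
  have r: "(\<lambda>x. (0 + (1/4) * (f x + g x)^2) + (0 + (-1/4) * (f x + (0 + (-1) * g x))^2)) \<in> AP \<rho> K (Suc m)"
    by (rule AP_add[OF r1 r2])
  have eq: "(\<lambda>x. (0 + (1/4) * (f x + g x)^2) + (0 + (-1/4) * (f x + (0 + (-1) * g x))^2)) = (\<lambda>x. f x * g x)"
    by (rule ext) (simp add: power2_eq_square algebra_simps)
  show ?thesis using r unfolding eq m_def .
qed

lemma linear_NN0:
  fixes f :: "real^'n::finite \<Rightarrow> real"
  assumes "bounded_linear f"
  shows "f \<in> NN \<rho> 0"
proof -
  have lin: "linear f" using assms bounded_linear.linear by blast
  have e: "f x = 0 + (\<Sum>j\<in>UNIV. f (axis j 1) * x $ j)" for x
  proof -
    have "x = (\<Sum>j\<in>UNIV. (x $ j) *\<^sub>R axis j 1)"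
      using basis_expansion[of x] by (simp only: scalar_mult_eq_scaleR)
    then have "f x = f (\<Sum>j\<in>UNIV. (x $ j) *\<^sub>R axis j 1)" by (rule arg_cong[of _ _ f])
    also have "\<dots> = (\<Sum>j\<in>UNIV. (x $ j) *\<^sub>R f (axis j 1))"
      by (simp only: linear_sum[OF lin] linear_scale[OF lin])
    also have "\<dots> = (\<Sum>j\<in>UNIV. f (axis j 1) * x $ j)" by (simp add: mult.commute)
    finally show ?thesis by simp
  qed
  show ?thesis unfolding NN.simps mem_Collect_eq
    by (rule exI[of _ 0], rule exI[of _ "\<lambda>j. f (axis j 1)"], rule allI, rule e)
qed

lemma poly_AP:
  assumes K: "compact K" and p: "real_polynomial_function (p :: real^'n::finite \<Rightarrow> real)"
  shows "\<exists>L. p \<in> AP \<rho> K L"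
  using p
proof (induct p rule: real_polynomial_function.induct)
  case (linear f)
  then show ?case using AP_NN[OF linear_NN0] by (intro exI[of _ 0])
next
  case (const c)
  show ?case using AP_NN[OF NN_const] by (intro exI[of _ 0])
next
  case (add f g)
  then obtain L1 L2 where "f \<in> AP \<rho> K L1" "g \<in> AP \<rho> K L2" by blast
  then have "f \<in> AP \<rho> K (max L1 L2)" "g \<in> AP \<rho> K (max L1 L2)"
    using AP_mono'[OF K] max.cobounded1 max.cobounded2 by blast+
  then show ?case by (intro exI[of _ "max L1 L2"] AP_add)
next
  case (mult f g)
  then obtain L1 L2 where "f \<in> AP \<rho> K L1" "g \<in> AP \<rho> K L2" by blast
  then show ?case by (intro exI[of _ "Suc (max L1 L2)"] AP_mult[OF K])
qed

end


theorem mainTheorem7: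
  fixes K :: "(real^'n) set" and f :: "real^'n \<Rightarrow> real" and \<epsilon> :: real
    and \<rho> :: "real \<Rightarrow> real"
  assumes "compact K" and "continuous_on K f" and "\<epsilon> > 0"
    and "smooth_activation \<rho>"
  shows "\<exists>(G :: 'm::finite icnn) (S :: ('n, 'm) smooth_net).
           icnn_valid G \<and>
           (SUP x\<in>K. ereal \<bar>icnn_eval G (sm_eval \<rho> S x) - f x\<bar>) < ereal \<epsilon>"
proof -
  obtain \<rho>' Lp where der: "\<And>x. (\<rho> has_real_derivative \<rho>' x) (at x)"
    and lipo: "Lp-lipschitz_on UNIV \<rho>'" and naff: "\<not> (\<exists>a b. \<forall>x. \<rho> x = a * x + b)"
    using assms(4) unfolding smooth_activation_def by blast
  have lip: "\<bar>\<rho>' x - \<rho>' y\<bar> \<le> Lp * \<bar>x - y\<bar>" for x y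
    using lipschitz_onD[OF lipo UNIV_I UNIV_I] by (simp add: dist_real_def)
  have Lnn: "0 \<le> Lp" by (rule lipschitz_on_nonneg[OF lipo])
  have "\<exists>a0 b0. \<rho>' a0 \<noteq> \<rho>' b0"
  proof (rule ccontr)
    assume H: "\<not> (\<exists>a0 b0. \<rho>' a0 \<noteq> \<rho>' b0)"
    have c: "\<rho>' x = \<rho>' 0" for x
    proof (rule ccontr)
      assume "\<rho>' x \<noteq> \<rho>' 0"
      then have "\<exists>a0 b0. \<rho>' a0 \<noteq> \<rho>' b0" by (intro exI)
      then show False using H by contradiction
    qed
    have d0: "DERIV (\<lambda>x. \<rho> x - \<rho>' 0 * x) x :> 0" for x
    proof -
      have "DERIV (\<lambda>x. \<rho>' 0 * x) x :> \<rho>' 0" by (auto intro!: derivative_eq_intros)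
      from DERIV_diff[OF der this] show ?thesis using c[of x] by simp
    qed
    have e: "\<rho> x = \<rho>' 0 * x + \<rho> 0" for x
    proof -
      have "\<rho> x - \<rho>' 0 * x = \<rho> 0 - \<rho>' 0 * 0"
        using DERIV_isconst_all[of "\<lambda>x. \<rho> x - \<rho>' 0 * x" x 0, OF allI[OF d0]] by simp
      then show ?thesis by linarith
    qed
    then have "\<forall>x. \<rho> x = \<rho>' 0 * x + \<rho> 0" by blast
    then have "\<exists>a b. \<forall>x. \<rho> x = a * x + b" by (intro exI)
    with naff show False by contradiction
  qed
  then obtain a0 b0 where nc: "\<rho>' a0 \<noteq> \<rho>' b0" by blast
  interpret A: act2 \<rho> \<rho>' Lp a0 b0
    by unfold_locales (fact der lip Lnn nc)+
  have e2: "0 < \<epsilon> / 2" using assms(3) by simp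
  obtain p where p: "polynomial_function p" "\<forall>x\<in>K. norm (f x - p x) < \<epsilon> / 2"
    using Stone_Weierstrass_polynomial_function[OF assms(1) assms(2) e2] by blast
  have rp: "real_polynomial_function p" using p(1) real_polynomial_function_eq by blast
  obtain L where "p \<in> AP \<rho> K L" using A.poly_AP[OF assms(1) rp] by blast
  then have pS: "p \<in> AP \<rho> K (Suc L)" by (rule A.AP_Suc[OF assms(1)])
  have e4: "0 < \<epsilon> / 4" using assms(3) by simp
  obtain g where g: "g \<in> NN \<rho> (Suc L)" "\<forall>x\<in>K. \<bar>p x - g x\<bar> \<le> \<epsilon> / 4"
    using APD[OF pS e4] by blast
  from g(1) obtain c and d :: nat and V h where h: "\<forall>j<d. h j \<in> NN \<rho> L"
    and gdef: "\<forall>x. g x = c + (\<Sum>j<d. V j * \<rho> (h j x))"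
    by (simp only: NN.simps mem_Collect_eq) blast
  obtain W0 :: "nat \<Rightarrow> 'n \<Rightarrow> real" and b0 hs where Z: "\<forall>x::real^'n. \<forall>j<d.
        sm_hidden \<rho> hs (\<lambda>i. \<rho> (b0 i + (\<Sum>j\<in>UNIV. W0 i j * x $ j))) j = \<rho> (h j x)"
    using realize[of \<rho> L, THEN spec[of _ d], THEN spec[of _ h], THEN mp, OF h] by blast
  define S :: "('n, 'm) smooth_net" where "S = SNet W0 b0 hs d (\<lambda>k. V) (\<lambda>k. c)"
  define G :: "'m icnn" where "G = ICNN (\<lambda>_ _. 0) (\<lambda>_. 0) [] 0 (\<lambda>_. 0) (\<lambda>k. if k = undefined then 1 else 0) 0"
  have Gv: "icnn_valid G" by (simp add: G_def)
  have Ge: "icnn_eval G u = u $ undefined" for u :: "real^'m"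
  proof -
    have "(\<Sum>k\<in>UNIV. (if k = undefined then 1 else 0) * u $ k) = (\<Sum>k\<in>UNIV. if k = undefined then u $ k else 0)"
      by (rule sum.cong) auto
    then show ?thesis by (simp add: G_def)
  qed
  have Se: "sm_eval \<rho> S x $ k = g x" for x k
  proof -
    define z1 where "z1 = (\<lambda>i. \<rho> (b0 i + (\<Sum>j\<in>UNIV. W0 i j * x $ j)))"
    have "(\<Sum>j<d. V j * sm_hidden \<rho> hs z1 j) = (\<Sum>j<d. V j * \<rho> (h j x))"
      by (rule sum.cong) (simp_all add: Z z1_def)
    then show ?thesis unfolding S_def by (simp add: Let_def gdef z1_def)
  qed
  have bound: "ereal \<bar>icnn_eval G (sm_eval \<rho> S x) - f x\<bar> \<le> ereal (3 * \<epsilon> / 4)" if x: "x \<in> K" for x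
  proof -
    have "icnn_eval G (sm_eval \<rho> S x) = g x" by (simp add: Ge Se)
    moreover have "\<bar>p x - g x\<bar> \<le> \<epsilon> / 4" using g(2) x by blast
    moreover have "\<bar>f x - p x\<bar> < \<epsilon> / 2" using p(2) x by auto
    ultimately have "\<bar>icnn_eval G (sm_eval \<rho> S x) - f x\<bar> \<le> 3 * \<epsilon> / 4"
      unfolding abs_le_iff abs_less_iff by linarith
    then show ?thesis by simp
  qed
  have "(SUP x\<in>K. ereal \<bar>icnn_eval G (sm_eval \<rho> S x) - f x\<bar>) \<le> ereal (3 * \<epsilon> / 4)"
    by (rule SUP_least) (rule bound)
  also have "\<dots> < ereal \<epsilon>" using assms(3) by simp
  finally have fin: "(SUP x\<in>K. ereal \<bar>icnn_eval G (sm_eval \<rho> S x) - f x\<bar>) < ereal \<epsilon>" .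
  show ?thesis by (intro exI[of _ G] exI[of _ S] conjI Gv fin)
qed

end
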